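(* Let $X$ be a uniformly convex and uniformly smooth Banach space and let $(g_k)$ be bijective linear isometries of $X$ such that $(g_k^{-1})$ converges strongly (pointwise in norm). If $x_k\rightharpoondown0$, then $g_kx_k\rightharpoondown0$.
   Context: $x_k\rightharpoondown x$ (Δ-convergence) means: for every $y\in X$, $\limsup_{k\to\infty}(\|x_k-x\|-\|x_k-y\|)\le0$. *)

theory Defs
  imports "HOL-Analysis.Analysis" "HOL-Library.Extended_Real"
begin

definition uniformly_convex :: "'a::real_normed_vector itself \<Rightarrow> bool" where
  "uniformly_convex _ \<longleftrightarrow>
     (\<forall>e>0. \<exists>d>0. \<forall>x y::'a. norm x \<le> 1 \<longrightarrow> norm y \<le> 1 \<longrightarrow> norm (x - y) \<ge> e
        \<longrightarrow> norm ((1/2) *\<^sub>R (x + y)) \<le> 1 - d)"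

definition modulus_of_smoothness :: "'a::real_normed_vector itself \<Rightarrow> real \<Rightarrow> real" where
  "modulus_of_smoothness _ t =
     (SUP p \<in> {(x::'a, y). norm x = 1 \<and> norm y = t}. (norm (fst p + snd p) + norm (fst p - snd p)) / 2 - 1)"

definition uniformly_smooth :: "'a::real_normed_vector itself \<Rightarrow> bool" where
  "uniformly_smooth T \<longleftrightarrow> ((\<lambda>t. modulus_of_smoothness T t / t) \<longlongrightarrow> 0) (at_right 0)"

definition Delta_conv :: "(nat \<Rightarrow> 'a::real_normed_vector) \<Rightarrow> 'a \<Rightarrow> bool" where
  "Delta_conv xs x \<longleftrightarrow>
     (\<forall>y. limsup (\<lambda>k. ereal (norm (xs k - x) - norm (xs k - y))) \<le> 0)"

end

theory Submission
  imports Defs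
begin

theorem lemma5p7:
  fixes g :: "nat \<Rightarrow> 'a::banach \<Rightarrow> 'a" and xs :: "nat \<Rightarrow> 'a"
  assumes "uniformly_convex TYPE('a)" and "uniformly_smooth TYPE('a)"
    and "\<And>k. linear (g k)" and "\<And>k. bij (g k)"
    and "\<And>k x. norm (g k x) = norm x"
    and "\<And>x. convergent (\<lambda>k. inv (g k) x)"
    and "Delta_conv xs 0"
  shows "Delta_conv (\<lambda>k. g k (xs k)) 0"
  unfolding Delta_conv_def
proof
  fix y
  define h where "h k = inv (g k) y" for k
  obtain z where z: "h \<longlonglongrightarrow> z" using assms(6)[of y] unfolding h_def convergent_def by blast
  define e where "e k = norm (h k - z)" for k
  have e0: "e \<longlonglongrightarrow> 0" unfolding e_def using z by (simp add: tendsto_norm_zero_iff LIM_zero)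
  have gh: "g k (h k) = y" for k unfolding h_def using assms(4)[of k] by (simp add: bij_def surj_f_inv_f)
  have eq: "norm (g k (xs k) - y) = norm (xs k - h k)" for k
    using assms(5)[of k "xs k - h k"] linear_diff[OF assms(3)[of k]] gh[of k] by simp
  have le: "ereal (norm (g k (xs k) - 0) - norm (g k (xs k) - y))
      \<le> ereal (norm (xs k - 0) - norm (xs k - z)) + ereal (e k)" for k
  proof -
    have "norm (xs k - z) \<le> norm (xs k - h k) + norm (h k - z)"
      by (metis diff_add_cancel norm_triangle_ineq add.commute diff_add_eq)
    then show ?thesis using eq[of k] assms(5)[of k "xs k"] unfolding e_def by simp
  qed
  have "limsup (\<lambda>k. ereal (norm (g k (xs k) - 0) - norm (g k (xs k) - y)))
     \<le> limsup (\<lambda>k. ereal (norm (xs k - 0) - norm (xs k - z)) + ereal (e k))"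
    by (rule Limsup_mono) (use le in auto)
  also have "\<dots> \<le> limsup (\<lambda>k. ereal (norm (xs k - 0) - norm (xs k - z))) + limsup (\<lambda>k. ereal (e k))"
    by (rule ereal_limsup_add_mono)
  also have "limsup (\<lambda>k. ereal (e k)) = 0"
    using lim_imp_Limsup[of sequentially "\<lambda>k. ereal (e k)" 0] e0 by (simp add: zero_ereal_def)
  also have "limsup (\<lambda>k. ereal (norm (xs k - 0) - norm (xs k - z))) \<le> 0"
    using assms(7) unfolding Delta_conv_def by blast
  finally show "limsup (\<lambda>k. ereal (norm (g k (xs k) - 0) - norm (g k (xs k) - y))) \<le> 0"
    by simp
qed

end
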